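(* Let $q>1$, $A>0$, $\alpha=q/(q-1)$, and $c(A,q)=\tfrac12\big(A(4q-2)/q\big)^q$. Let $V\ge0$ be a maximizer of $y_V(1)$ over non-negative $V\in L^q[0,1]$ with $\|V\|_{L^q}\le A$. Let $H$ and $\Psi$ be associated with $V$, that is: - $\Psi>0$ on $(0,1)$; - $\Psi''-|\Psi|^\alpha+2H=0$; - $\Psi(0)=\Psi(1)=0$; - $\Psi'(0)=H-c(A,q)$; - $V=\frac{q}{4q-2}\Psi^{1/(q-1)}$. Then $H\in(c(A,q),h(A,q))$, where $h(A,q)$ is as defined below.
   Context: For $V\in L^q[0,1]$, $y_V$ denotes the solution of $-y''+Vy=0$ on $[0,1]$ with $y(0)=0$, $y'(0)=1$. The number $h(A,q)$ is the unique $H>c(A,q)$ such that $(2H)^{1/\alpha}$ is a root of $f_H(x)=\frac{2}{\alpha+1}x|x|^\alpha-4Hx+(H-c(A,q))^2$. *)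

theory Defs
  imports "HOL-Analysis.Analysis"
begin

definition alpha_exp :: "real \<Rightarrow> real" where
  "alpha_exp q = q / (q - 1)"

definition cAq :: "real \<Rightarrow> real \<Rightarrow> real" where
  "cAq A q = (1/2) * (A * (4*q - 2) / q) powr q"

text \<open>Admissible potentials: non-negative on [0,1], measurable, with L^q norm at most A
  (encoded as the non-negative integral of |V|^q being at most A^q, which also gives V in L^q).\<close>
definition admissible :: "real \<Rightarrow> real \<Rightarrow> (real \<Rightarrow> real) \<Rightarrow> bool" where
  "admissible A q V \<longleftrightarrow>
     set_borel_measurable lborel {0..1} V \<and>
     (\<forall>x\<in>{0..1}. V x \<ge> 0) \<and>
     (\<integral>\<^sup>+ x\<in>{0..1}. ennreal (\<bar>V x\<bar> powr q) \<partial>lborel) \<le> ennreal (A powr q)"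

text \<open>Solution of -y'' + V y = 0, y(0)=0, y'(0)=1 on [0,1] in the integrated (W^{2,q}) sense:
  y continuous and y(t) = \<integral>_0^t (1 + \<integral>_0^s V y).\<close>
definition is_sol :: "(real \<Rightarrow> real) \<Rightarrow> (real \<Rightarrow> real) \<Rightarrow> bool" where
  "is_sol V y \<longleftrightarrow> continuous_on {0..1} y \<and>
     (\<forall>t\<in>{0..1}. y t = (LINT s:{0..t}|lborel. 1 + (LINT r:{0..s}|lborel. V r * y r)))"

definition yV1 :: "(real \<Rightarrow> real) \<Rightarrow> real" where
  "yV1 V = (THE c. \<exists>y. is_sol V y \<and> y 1 = c)"

definition fH :: "real \<Rightarrow> real \<Rightarrow> real \<Rightarrow> real \<Rightarrow> real" where
  "fH A q H x = 2 / (alpha_exp q + 1) * x * \<bar>x\<bar> powr (alpha_exp q) - 4 * H * x + (H - cAq A q)^2"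

definition hAq :: "real \<Rightarrow> real \<Rightarrow> real" where
  "hAq A q = (THE H. H > cAq A q \<and> fH A q H ((2*H) powr (1 / alpha_exp q)) = 0)"

end

theory Submission
  imports Defs
begin

lemma Phi_eq:
  assumes "a = alpha_exp q" "a > 0" "H > 0"
  shows "fH A q H ((2*H) powr (1/a)) = (H - cAq A q)^2 - (4*a/(a+1)) * H * (2*H) powr (1/a)"
proof -
  define X where "X = (2*H) powr (1/a)"
  have X0: "X > 0" using assms X_def by simp
  have XA: "\<bar>X\<bar> powr a = 2*H" using X0 X_def assms by (simp add: powr_powr)
  have "fH A q H X = 2/(a+1) * X * (2*H) - 4*H*X + (H - cAq A q)^2"
    unfolding fH_def using XA assms(1) by simp
  also have "\<dots> = (H - cAq A q)^2 - (4*a/(a+1)) * H * X"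
    using assms by (simp add: field_simps)
  finally show ?thesis unfolding X_def .
qed

lemma Phi_mono:
  fixes c b k H1 H2 :: real
  assumes "c > 0" "0 < b" "b < 1" "k > 0" "c < H1" "H1 < H2"
    and "(H1 - c)^2 \<ge> k * H1 * (2*H1) powr b"
  shows "(H2 - c)^2 > k * H2 * (2*H2) powr b"
proof -
  define t where "t = H2 / H1"
  have H10: "H1 > 0" using assms by simp
  have t1: "t > 1" using assms H10 by (simp add: t_def)
  have H2t: "H2 = t * H1" using H10 by (simp add: t_def)
  define s where "s = t powr ((1+b)/2)"
  have s1: "s > 1" unfolding s_def using t1 assms powr_less_mono[of 0 "(1+b)/2" t] by simp
  have st: "s < t" unfolding s_def using t1 assms powr_less_mono[of "(1+b)/2" 1 t] by simp
  have ss: "s^2 = t powr (1+b)" unfolding s_def using t1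
    by (simp add: power2_eq_square powr_add[symmetric])
  have "k * H2 * (2*H2) powr b = t powr (1+b) * (k * H1 * (2*H1) powr b)"
    using t1 H10 by (simp add: H2t powr_mult powr_add)
  also have "\<dots> \<le> s^2 * (H1 - c)^2" using assms(7) ss t1 by (simp add: mult_left_mono)
  also have "\<dots> = (s * (H1 - c))^2" by (simp add: power_mult_distrib)
  also have "\<dots> < (H2 - c)^2"
  proof -
    have "H2 - c - s * (H1 - c) = H1 * (t - s) + c * (s - 1)" by (simp add: H2t algebra_simps)
    also have "\<dots> > 0" using H10 st s1 assms by (intro add_pos_pos mult_pos_pos) auto
    finally have "s * (H1 - c) < H2 - c" by simp
    moreover have "0 \<le> s * (H1 - c)" using s1 assms by simp
    ultimately show ?thesis by (intro power_strict_mono) auto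
  qed
  finally show ?thesis .
qed

lemma Phi_big:
  fixes c b k :: real
  assumes "c > 0" "0 < b" "b < 1" "k > 0"
  shows "\<exists>B>c. (B - c)^2 \<ge> k * B * (2*B) powr b"
proof -
  define K where "K = 4 * k * 2 powr b"
  have K0: "K > 0" using assms by (simp add: K_def)
  define B where "B = max (2*c) (K powr (1/(1-b))) + 1"
  have B0: "B > 0" and Bc: "B > 2*c" using assms by (auto simp: B_def)
  have "K powr (1/(1-b)) \<le> B" by (simp add: B_def)
  then have "(K powr (1/(1-b))) powr (1-b) \<le> B powr (1-b)" using assms by (intro powr_mono2) auto
  then have KB: "K \<le> B powr (1-b)" using assms K0 by (simp add: powr_powr)
  have "k * B * (2*B) powr b = K/4 * B powr (1+b)" using B0 by (simp add: K_def powr_mult powr_add)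
  also have "\<dots> \<le> B powr (1-b) / 4 * B powr (1+b)" using KB by (intro mult_right_mono) auto
  also have "\<dots> = B^2 / 4" using B0 by (simp add: powr_add[symmetric] power2_eq_square)
  also have "\<dots> \<le> (B - c)^2"
  proof -
    have "B/2 \<le> B - c" using Bc by simp
    then have "(B/2)^2 \<le> (B-c)^2" using B0 by (intro power_mono) auto
    then show ?thesis by (simp add: power_divide)
  qed
  finally show ?thesis using Bc assms by (intro exI[of _ B]) auto
qed


lemma fH_cont: assumes "a = alpha_exp q" "a > 0"
  shows "continuous_on S (fH A q H)"
  unfolding fH_def using assms
  by (intro continuous_intros continuous_on_powr') auto

lemma fH_deriv: assumes "a = alpha_exp q" "a > 0" "y > 0"
  shows "(fH A q H has_real_derivative (2 * y powr a - 4*H)) (at y)"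
proof -
  have ev: "eventually (\<lambda>z. fH A q H z = 2/(a+1) * z powr (a+1) - 4*H*z + (H - cAq A q)^2) (nhds y)"
  proof -
    have "eventually (\<lambda>z. z > 0) (nhds y)" using eventually_nhds_in_open[of "{0<..}" y] assms(3) by simp
    then show ?thesis
      by eventually_elim (simp add: fH_def assms(1) powr_add)
  qed
  have "((\<lambda>z. 2/(a+1) * z powr (a+1) - 4*H*z + (H - cAq A q)^2) has_real_derivative
        2/(a+1) * ((a+1) * y powr (a+1-1)) - 4*H) (at y)"
    using assms(3) by (auto intro!: derivative_eq_intros)
  moreover have "2/(a+1) * ((a+1) * y powr (a+1-1)) - 4*H = 2 * y powr a - 4*H"
    using assms by simp
  ultimately show ?thesis
    using DERIV_cong_ev[OF refl ev refl] by simp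
qed

lemma powr_lip_aux:
  fixes a u v B :: real
  assumes "a \<ge> 1" "0 < u" "u < v" "v \<le> B"
  shows "v powr a - u powr a \<le> a * B powr (a-1) * (v - u)"
proof -
  have d: "\<And>x. u \<le> x \<Longrightarrow> x \<le> v \<Longrightarrow> ((\<lambda>t. t powr a) has_real_derivative a * x powr (a-1)) (at x)"
    using assms(2) by (intro has_real_derivative_powr) auto
  obtain z where z: "u < z" "z < v" "v powr a - u powr a = (v - u) * (a * z powr (a-1))"
    using MVT2[OF assms(3), of "\<lambda>t. t powr a" "\<lambda>t. a * t powr (a-1)", OF d] by blast
  have "z powr (a-1) \<le> B powr (a-1)"
    using z assms by (intro powr_mono2) auto
  then have "a * z powr (a-1) \<le> a * B powr (a-1)" using assms by simp
  then show ?thesis using z(3) assms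
    by (metis mult.commute mult_right_mono diff_ge_0_iff_ge less_imp_le)
qed

lemma powr_lip:
  fixes a u v B :: real
  assumes "a \<ge> 1" "0 < u" "0 < v" "u \<le> B" "v \<le> B"
  shows "\<bar>v powr a - u powr a\<bar> \<le> a * B powr (a-1) * \<bar>v - u\<bar>"
proof (cases u v rule: linorder_cases)
  case less
  moreover have "u powr a \<le> v powr a" using less assms by (intro powr_mono2) auto
  ultimately show ?thesis using powr_lip_aux[of a u v B] assms by auto
next
  case greater
  moreover have "v powr a \<le> u powr a" using greater assms by (intro powr_mono2) auto
  ultimately show ?thesis using powr_lip_aux[of a v u B] assms by auto
qed simp

lemma X_pow: fixes a H :: real assumes "a > 0" "H > 0" shows "((2*H) powr (1/a)) powr a = 2*H"
  using assms by (simp add: powr_powr)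

lemma fH_mvt:
  assumes "a = alpha_exp q" "a > 0" "0 \<le> u" "u < v"
  shows "\<exists>z. u < z \<and> z < v \<and> fH A q H v - fH A q H u = (v - u) * (2 * z powr a - 4*H)"
proof -
  have d: "\<And>x. u < x \<Longrightarrow> x < v \<Longrightarrow> fH A q H differentiable (at x)"
  proof -
    fix x assume "u < x" "x < v"
    then have "x > 0" using assms(3) by simp
    then show "fH A q H differentiable (at x)"
      using fH_deriv[OF assms(1,2)] real_differentiable_def by blast
  qed
  obtain l z where lz: "u < z" "z < v" "DERIV (fH A q H) z :> l" "fH A q H v - fH A q H u = (v - u) * l"
    using MVT[OF assms(4) fH_cont[OF assms(1,2)] d] by blast
  have "z > 0" using lz assms(3) by simp
  then have "l = 2 * z powr a - 4*H" using fH_deriv[OF assms(1,2), of z] lz(3) DERIV_unique by blast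
  then show ?thesis using lz by blast
qed

lemma fH_min:
  assumes "a = alpha_exp q" "a > 0" "H > 0" "X = (2*H) powr (1/a)" "y \<ge> 0" "y \<noteq> X"
  shows "fH A q H X < fH A q H y"
proof -
  have X0: "X > 0" using assms by simp
  have XA: "X powr a = 2*H" using X_pow assms by simp
  show ?thesis
  proof (cases "y < X")
    case True
    then obtain z where z: "y < z" "z < X" "fH A q H X - fH A q H y = (X - y) * (2 * z powr a - 4*H)"
      using fH_mvt[OF assms(1,2,5)] by blast
    have "z powr a < X powr a" using z assms by (intro powr_less_mono2) auto
    then have "(X - y) * (2 * z powr a - 4*H) < 0" using XA True by (intro mult_pos_neg) auto
    then show ?thesis using z by simp
  next
    case False
    then have yX: "X < y" using assms by simp
    then obtain z where z: "X < z" "z < y" "fH A q H y - fH A q H X = (y - X) * (2 * z powr a - 4*H)"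
      using fH_mvt[OF assms(1,2), of X y] X0 by auto
    have "X powr a < z powr a" using z X0 assms by (intro powr_less_mono2) auto
    then have "(y - X) * (2 * z powr a - 4*H) > 0" using XA yX by (intro mult_pos_pos) auto
    then show ?thesis using z by simp
  qed
qed

lemma fH_upper:
  assumes "a = alpha_exp q" "a \<ge> 1" "H > 0" "X = (2*H) powr (1/a)" "y \<ge> 0" "y \<le> B" "X \<le> B"
  shows "fH A q H y - fH A q H X \<le> 2 * a * B powr (a-1) * (y - X)^2"
proof -
  have a0: "a > 0" using assms by simp
  have X0: "X > 0" using assms by simp
  have XA: "X powr a = 2*H" using X_pow a0 assms by simp
  let ?L = "a * B powr (a-1)"
  have L0: "?L \<ge> 0" using a0 by simp
  show ?thesis
  proof (cases y X rule: linorder_cases)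
    case less
    then obtain z where z: "y < z" "z < X" "fH A q H X - fH A q H y = (X - y) * (2 * z powr a - 4*H)"
      using fH_mvt[OF assms(1) a0 assms(5)] by blast
    have "\<bar>X powr a - z powr a\<bar> \<le> ?L * \<bar>X - z\<bar>"
      using z assms by (intro powr_lip) auto
    also have "\<dots> \<le> ?L * \<bar>X - y\<bar>" using z L0 by (intro mult_left_mono) auto
    finally have b: "X powr a - z powr a \<le> ?L * (X - y)" using less by simp
    have "fH A q H y - fH A q H X = (X - y) * (2 * (X powr a - z powr a))"
      using z(3) XA by (simp add: algebra_simps)
    also have "\<dots> \<le> (X - y) * (2 * (?L * (X - y)))"
      using b less by (intro mult_left_mono) auto
    also have "\<dots> = 2 * a * B powr (a-1) * (y - X)^2" by (simp add: power2_eq_square algebra_simps)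
    finally show ?thesis .
  next
    case greater
    then obtain z where z: "X < z" "z < y" "fH A q H y - fH A q H X = (y - X) * (2 * z powr a - 4*H)"
      using fH_mvt[OF assms(1) a0, of X y] X0 by auto
    have "\<bar>z powr a - X powr a\<bar> \<le> ?L * \<bar>z - X\<bar>"
      using z assms X0 by (intro powr_lip) (auto simp del: powr_gt_zero)
    also have "\<dots> \<le> ?L * \<bar>y - X\<bar>" using z L0 by (intro mult_left_mono) auto
    finally have b: "z powr a - X powr a \<le> ?L * (y - X)" using greater by simp
    have "fH A q H y - fH A q H X = (y - X) * (2 * (z powr a - X powr a))"
      using z(3) XA by (simp add: algebra_simps)
    also have "\<dots> \<le> (y - X) * (2 * (?L * (y - X)))"
      using b greater by (intro mult_left_mono) auto
    also have "\<dots> = 2 * a * B powr (a-1) * (y - X)^2" by (simp add: power2_eq_square algebra_simps)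
    finally show ?thesis .
  qed simp
qed


lemma h_bound:
  assumes "q > 1" "A > 0" "cAq A q < H" "fH A q H ((2*H) powr (1/alpha_exp q)) < 0"
  shows "H < hAq A q"
proof -
  define a where "a = alpha_exp q"
  define c where "c = cAq A q"
  define k where "k = 4*a/(a+1)"
  define Phi where "Phi = (\<lambda>h::real. (h - c)^2 - k * h * (2*h) powr (1/a))"
  have a1: "a > 1" using assms(1) by (simp add: a_def alpha_exp_def)
  have c0: "c > 0" using assms(1,2) by (simp add: c_def cAq_def)
  have k0: "k > 0" using a1 by (simp add: k_def)
  have b0: "0 < 1/a" "1/a < 1" using a1 by auto
  have PE: "\<And>h. h > 0 \<Longrightarrow> fH A q h ((2*h) powr (1/alpha_exp q)) = Phi h"
    using Phi_eq a1 by (simp add: Phi_def a_def c_def k_def)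
  have mono: "\<And>h1 h2. c < h1 \<Longrightarrow> h1 < h2 \<Longrightarrow> Phi h1 \<ge> 0 \<Longrightarrow> Phi h2 > 0"
    using Phi_mono[OF c0 b0 k0] by (simp add: Phi_def)
  obtain B where B: "B > c" "Phi B \<ge> 0" using Phi_big[OF c0 b0 k0] by (auto simp: Phi_def)
  have Pc: "Phi c < 0" using c0 k0 by (simp add: Phi_def)
  have cont: "continuous_on {c..B} Phi" unfolding Phi_def using c0
    by (intro continuous_intros) auto
  obtain h0 where h0: "c \<le> h0" "h0 \<le> B" "Phi h0 = 0"
    using IVT'[of Phi c 0 B, OF _ _ _ cont] Pc B by auto
  have h0c: "h0 > c" using h0 Pc by (cases "h0 = c") auto
  have "hAq A q = h0"
    unfolding hAq_def
  proof (rule the_equality)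
    show "h0 > cAq A q \<and> fH A q h0 ((2*h0) powr (1/alpha_exp q)) = 0"
      using h0c h0 PE c0 by (simp add: c_def)
  next
    fix h assume h: "h > cAq A q \<and> fH A q h ((2*h) powr (1/alpha_exp q)) = 0"
    then have hc: "h > c" and Ph: "Phi h = 0" using PE c0 by (auto simp: c_def)
    show "h = h0"
    proof (rule ccontr)
      assume "h \<noteq> h0"
      then consider "h < h0" | "h0 < h" by linarith
      then show False
        using mono[of h h0] mono[of h0 h] hc h0c Ph h0(3) by (cases; auto)
    qed
  qed
  moreover have "H < h0"
  proof (rule ccontr)
    assume "\<not> H < h0"
    then consider "H = h0" | "h0 < H" by linarith
    moreover have "Phi H < 0" using PE assms(3,4) c0 by (auto simp: c_def)
    ultimately show False using mono[of h0 H] h0 h0c by (cases; auto)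
  qed
  ultimately show ?thesis by simp
qed


theorem mainTheorem17:
  fixes A q H :: real and V \<Psi> \<Psi>' \<Psi>'' :: "real \<Rightarrow> real"
  assumes "q > 1" and "A > 0"
    and "admissible A q V"
    and "\<forall>W. admissible A q W \<longrightarrow> yV1 W \<le> yV1 V"
    and "\<forall>x\<in>{0<..<1}. \<Psi> x > 0"
    and "\<forall>x\<in>{0..1}. (\<Psi> has_real_derivative \<Psi>' x) (at x within {0..1})"
    and "\<forall>x\<in>{0..1}. (\<Psi>' has_real_derivative \<Psi>'' x) (at x within {0..1})"
    and "\<forall>x\<in>{0..1}. \<Psi>'' x - \<bar>\<Psi> x\<bar> powr (alpha_exp q) + 2 * H = 0"
    and "\<Psi> 0 = 0" and "\<Psi> 1 = 0"
    and "\<Psi>' 0 = H - cAq A q"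
    and "\<forall>x\<in>{0..1}. V x = q / (4*q - 2) * \<Psi> x powr (1 / (q - 1))"
  shows "cAq A q < H \<and> H < hAq A q"
proof -
  define a where "a = alpha_exp q"
  define c where "c = cAq A q"
  define f where "f = fH A q H"
  have a1: "a > 1" using assms(1) by (simp add: a_def alpha_exp_def)
  have c0: "c > 0" using assms(1,2) by (simp add: c_def cAq_def)
  have Pnn: "\<And>x. x \<in> {0..1} \<Longrightarrow> \<Psi> x \<ge> 0"
  proof -
    fix x :: real assume x: "x \<in> {0..1}"
    show "\<Psi> x \<ge> 0"
    proof (cases "x = 0 \<or> x = 1")
      case True then show ?thesis using assms(9,10) by auto
    next
      case False
      then have "x \<in> {0<..<1}" using x by auto
      then show ?thesis using assms(5) less_imp_le by blast
    qed
  qed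
  have cP: "continuous_on {0..1} \<Psi>"
    using assms(6) DERIV_continuous continuous_on_eq_continuous_within by blast
  have cP': "continuous_on {0..1} \<Psi>'"
    using assms(7) DERIV_continuous continuous_on_eq_continuous_within by blast
  have dP: "\<And>x. 0 < x \<Longrightarrow> x < 1 \<Longrightarrow> (\<Psi> has_real_derivative \<Psi>' x) (at x)"
  proof -
    fix x :: real assume "0 < x" "x < 1"
    then have "x \<in> interior {0..1}" by simp
    moreover have "(\<Psi> has_real_derivative \<Psi>' x) (at x within {0..1})"
      using assms(6) \<open>0 < x\<close> \<open>x < 1\<close> by auto
    ultimately show "(\<Psi> has_real_derivative \<Psi>' x) (at x)"
      using at_within_interior[of x "{0..1::real}"] by metis
  qed
  have dP': "\<And>x. 0 < x \<Longrightarrow> x < 1 \<Longrightarrow> (\<Psi>' has_real_derivative \<Psi>'' x) (at x)"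
  proof -
    fix x :: real assume "0 < x" "x < 1"
    then have "x \<in> interior {0..1}" by simp
    moreover have "(\<Psi>' has_real_derivative \<Psi>'' x) (at x within {0..1})"
      using assms(7) \<open>0 < x\<close> \<open>x < 1\<close> by auto
    ultimately show "(\<Psi>' has_real_derivative \<Psi>'' x) (at x)"
      using at_within_interior[of x "{0..1::real}"] by metis
  qed
  have Hc: "H \<ge> c"
  proof (rule ccontr)
    assume "\<not> H \<ge> c"
    then have "\<Psi>' 0 < 0" using assms(11) by (simp add: c_def)
    then obtain d where d: "d > 0" "\<forall>h>0. 0 + h \<in> {0..1} \<longrightarrow> h < d \<longrightarrow> \<Psi> 0 > \<Psi> (0 + h)"
      using has_real_derivative_neg_dec_right[of \<Psi> "\<Psi>' 0" 0 "{0..1}"] assms(6) by auto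
    define h where "h = min (d/2) (1/2)"
    have h: "h > 0" "h < d" "h < 1" using d by (auto simp: h_def)
    then have "\<Psi> h < 0" using d assms(9) by auto
    moreover have "\<Psi> h > 0" using h assms(5) by auto
    ultimately show False by simp
  qed
  have H0: "H > 0" using Hc c0 by simp
  define E where "E = (\<lambda>t. (\<Psi>' t)^2 - f (\<Psi> t))"
  have cE: "continuous_on {0..1} E"
  proof -
    have "continuous_on {0..1} (\<lambda>t. f (\<Psi> t))"
      using continuous_on_compose2[OF fH_cont[of a q UNIV A H] cP] a1 by (simp add: f_def a_def)
    then show ?thesis unfolding E_def using cP' by (intro continuous_intros)
  qed
  have dE: "\<And>t. 0 < t \<Longrightarrow> t < 1 \<Longrightarrow> (E has_real_derivative 0) (at t)"
  proof -
    fix t :: real assume t: "0 < t" "t < 1"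
    have pos: "\<Psi> t > 0" using t assms(5) by auto
    have d1: "((\<lambda>t. (\<Psi>' t)^2) has_real_derivative of_nat 2 * (\<Psi>'' t * \<Psi>' t ^ (2 - Suc 0))) (at t)"
      using DERIV_power[OF dP'[OF t]] .
    have d2: "((\<lambda>t. f (\<Psi> t)) has_real_derivative (2 * \<Psi> t powr a - 4*H) * \<Psi>' t) (at t)"
      using DERIV_chain2[OF fH_deriv[of a q "\<Psi> t" A H] dP[OF t]] a1 pos by (simp add: f_def a_def)
    have "(E has_real_derivative of_nat 2 * (\<Psi>'' t * \<Psi>' t ^ (2 - Suc 0)) - (2 * \<Psi> t powr a - 4*H) * \<Psi>' t) (at t)"
      unfolding E_def using DERIV_diff[OF d1 d2] .
    moreover have "\<Psi>'' t = \<Psi> t powr a - 2*H"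
    proof -
      have "\<Psi>'' t - \<bar>\<Psi> t\<bar> powr (alpha_exp q) + 2 * H = 0" using assms(8) t by auto
      then show ?thesis using pos by (simp add: a_def)
    qed
    ultimately show "(E has_real_derivative 0) (at t)" by (simp add: algebra_simps)
  qed
  have E0: "E 0 = 0" using assms(9,11) by (simp add: E_def f_def fH_def c_def)
  have en: "\<And>t. t \<in> {0..1} \<Longrightarrow> (\<Psi>' t)^2 = f (\<Psi> t)"
  proof -
    fix t :: real assume t: "t \<in> {0..1}"
    have "E t = 0"
    proof (cases "t = 0")
      case True then show ?thesis using E0 by simp
    next
      case False
      then have "0 < t" using t by simp
      then have "E t = E 0"
        using DERIV_isconst_end[of 0 t E] continuous_on_subset[OF cE] dE t by auto
      then show ?thesis using E0 by simp
    qed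
    then show "(\<Psi>' t)^2 = f (\<Psi> t)" by (simp add: E_def)
  qed
  have Hc': "H > c"
  proof (rule ccontr)
    assume "\<not> H > c"
    then have Heq: "H = c" using Hc by simp
    define \<epsilon> where "\<epsilon> = (2*H) powr (1/a)"
    have e0: "\<epsilon> > 0" using H0 by (simp add: \<epsilon>_def)
    obtain \<delta> where \<delta>: "\<delta> > 0" "\<forall>x'\<in>{0..1}. dist x' 0 < \<delta> \<longrightarrow> dist (\<Psi> x') (\<Psi> 0) < \<epsilon>"
      using cP e0 unfolding continuous_on_iff by (metis atLeastAtMost_iff order_refl zero_le_one)
    define t where "t = min (\<delta>/2) (1/2)"
    have t: "t > 0" "t < \<delta>" "t < 1" using \<delta> by (auto simp: t_def)
    have pt: "\<Psi> t > 0" using t assms(5) by auto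
    have pe: "\<Psi> t < \<epsilon>" using \<delta> t assms(9) by (auto simp: dist_real_def)
    have "\<Psi> t powr a < \<epsilon> powr a" using pt pe a1 by (intro powr_less_mono2) auto
    also have "\<epsilon> powr a = 2*H" using X_pow[of a H] a1 H0 by (simp add: \<epsilon>_def)
    finally have lt: "\<Psi> t powr a < 2*H" .
    have "f (\<Psi> t) = \<Psi> t * (2/(a+1) * \<Psi> t powr a - 4*H)"
      using pt Heq by (simp add: f_def fH_def a_def c_def algebra_simps)
    also have "\<dots> < 0"
    proof -
      have "2/(a+1) \<le> 1" using a1 by simp
      then have "2/(a+1) * \<Psi> t powr a \<le> 1 * \<Psi> t powr a" by (intro mult_right_mono) auto
      then have "2/(a+1) * \<Psi> t powr a - 4*H < 0" using lt H0 by simp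
      then show ?thesis using pt by (simp add: mult_pos_neg)
    qed
    finally have "(\<Psi>' t)^2 < 0" using en t by auto
    then show False by simp
  qed
  obtain m where m: "0 < m" "m < 1" "\<Psi>' m = 0"
  proof -
    have dd: "\<And>x. 0 < x \<Longrightarrow> x < 1 \<Longrightarrow> (\<Psi> has_derivative (*) (\<Psi>' x)) (at x)"
      using dP by (simp add: has_field_derivative_def)
    have "\<exists>z. 0 < z \<and> z < 1 \<and> (*) (\<Psi>' z) = (\<lambda>v. 0)"
      using Rolle_deriv[OF zero_less_one _ cP dd] assms(9,10) by simp
    then obtain z where "0 < z" "z < 1" "(\<lambda>v. \<Psi>' z * v) = (\<lambda>v. 0)" by blast
    moreover from this(3) have "\<Psi>' z = 0" by (metis mult.right_neutral)
    ultimately show ?thesis using that by blast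
  qed
  have fm: "f (\<Psi> m) = 0" using en[of m] m by simp
  have pm: "\<Psi> m > 0" using m assms(5) by auto
  define X where "X = (2*H) powr (1/a)"
  have X0: "X > 0" using H0 by (simp add: X_def)
  have fX: "f X < 0"
  proof (rule ccontr)
    assume nX: "\<not> f X < 0"
    have mX: "\<Psi> m = X"
    proof (rule ccontr)
      assume "\<Psi> m \<noteq> X"
      then have "f X < f (\<Psi> m)" using fH_min[OF a_def _ H0 X_def, of "\<Psi> m" A] a1 pm
        by (simp add: f_def)
      then show False using nX fm by simp
    qed
    then have fX0: "f X = 0" using fm by simp
    obtain x0 where x0: "x0 \<in> {0..1}" "\<forall>y\<in>{0..1}. \<Psi> y \<le> \<Psi> x0"
      using continuous_attains_sup[OF compact_Icc _ cP] by auto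
    define B where "B = max X (\<Psi> x0)"
    define C where "C = 2 * a * B powr (a-1)"
    have C0: "C \<ge> 0" using a1 by (simp add: C_def)
    have bnd: "\<And>t. t \<in> {0..1} \<Longrightarrow> \<bar>\<Psi>' t\<bar> \<le> sqrt C * \<bar>X - \<Psi> t\<bar>"
    proof -
      fix t :: real assume t: "t \<in> {0..1}"
      have "(\<Psi>' t)^2 = f (\<Psi> t) - f X" using en[OF t] fX0 by simp
      also have "\<dots> \<le> C * (\<Psi> t - X)^2"
        unfolding C_def
      proof -
        have "\<Psi> t \<le> \<Psi> x0" using x0(2) t by blast
        then have "\<Psi> t \<le> B" by (simp add: B_def)
        then show "f (\<Psi> t) - f X \<le> 2 * a * B powr (a-1) * (\<Psi> t - X)^2"
          using fH_upper[OF a_def _ H0 X_def Pnn[OF t], of B A] a1 by (simp add: B_def f_def)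
      qed
      finally have "sqrt ((\<Psi>' t)^2) \<le> sqrt (C * (\<Psi> t - X)^2)" by (rule real_sqrt_le_mono)
      then show "\<bar>\<Psi>' t\<bar> \<le> sqrt C * \<bar>X - \<Psi> t\<bar>" by (simp add: real_sqrt_mult abs_minus_commute)
    qed
    define K where "K = 2 * sqrt C"
    define z where "z = (\<lambda>t. (X - \<Psi> t)^2 * exp (K*t))"
    have "z 0 \<le> z m"
    proof (rule DERIV_nonneg_imp_increasing_open[of 0 m z])
      show "0 \<le> m" using m by simp
      show "continuous_on {0..m} z" unfolding z_def
        using continuous_on_subset[OF cP, of "{0..m}"] m by (auto intro!: continuous_intros)
      fix t :: real assume t: "0 < t" "t < m"
      then have t1: "0 < t" "t < 1" using m by auto
      have d1: "((\<lambda>t. (X - \<Psi> t)^2) has_real_derivative of_nat 2 * ((0 - \<Psi>' t) * (X - \<Psi> t) ^ (2 - Suc 0))) (at t)"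
        using DERIV_power[OF DERIV_diff[OF DERIV_const dP[OF t1]]] .
      have d2: "((\<lambda>t. exp (K*t)) has_real_derivative exp (K*t) * K) (at t)"
        by (auto intro!: derivative_eq_intros)
      have dz: "(z has_real_derivative (of_nat 2 * ((0 - \<Psi>' t) * (X - \<Psi> t) ^ (2 - Suc 0))) * exp (K*t) + exp (K*t) * K * (X - \<Psi> t)^2) (at t)"
        unfolding z_def using DERIV_mult[OF d1 d2] .
      have "2 * (\<Psi>' t * (X - \<Psi> t)) \<le> K * (X - \<Psi> t)^2"
      proof -
        have "2 * (\<Psi>' t * (X - \<Psi> t)) \<le> 2 * (\<bar>\<Psi>' t\<bar> * \<bar>X - \<Psi> t\<bar>)"
          by (simp add: abs_mult[symmetric])
        also have "\<dots> \<le> 2 * ((sqrt C * \<bar>X - \<Psi> t\<bar>) * \<bar>X - \<Psi> t\<bar>)"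
          using bnd[of t] t1 by (intro mult_left_mono mult_right_mono) auto
        also have "\<dots> = K * (X - \<Psi> t)^2" by (simp add: K_def power2_eq_square abs_mult_self_eq)
        finally show ?thesis .
      qed
      then have "0 \<le> exp (K*t) * (K * (X - \<Psi> t)^2 - 2 * (\<Psi>' t * (X - \<Psi> t)))" by simp
      also have "\<dots> = (of_nat 2 * ((0 - \<Psi>' t) * (X - \<Psi> t) ^ (2 - Suc 0))) * exp (K*t) + exp (K*t) * K * (X - \<Psi> t)^2"
        by (simp add: algebra_simps)
      finally show "\<exists>y. (z has_real_derivative y) (at t) \<and> 0 \<le> y" using dz by blast
    qed
    moreover have "z m = 0" using mX by (simp add: z_def)
    moreover have "z 0 > 0" using assms(9) X0 by (simp add: z_def)
    ultimately show False by simp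
  qed
  have "f X = fH A q H ((2*H) powr (1/alpha_exp q))" by (simp add: f_def X_def a_def)
  then have "H < hAq A q" using h_bound[OF assms(1,2)] Hc' fX by (simp add: c_def)
  then show ?thesis using Hc' by (simp add: c_def)
qed

end
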